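(* For every $p\in[0,1]$ and $k\ge1$, there is a deterministic algorithm for Locate on the uniform input distribution that runs in $k$ rounds, asks at most $k\lceil pn\rceil^{1/k}$ queries, and succeeds with probability at least $p$.
   Context: Locate problem in the rank query model: there is a vector $\vec{x}=(x_1,\ldots,x_n)$ whose ranks form a permutation of $\{1,\ldots,n\}$; an index $i$ is given and the goal is to output $\mathrm{rank}(x_i)$. Queries have the form "How is $\mathrm{rank}(x_j)$ compared to $m$?", with answer "$<$", "$=$" or "$>$". An algorithm runs in $k$ rounds if in each of $k$ rounds it submits a set of queries chosen depending only on answers of earlier rounds, then receives all answers. On the uniform input distribution the rank permutation is uniformly random, and the success probability is over this randomness. *)

theory Defs
  imports "HOL-Combinatorics.Permutations" Complex_Main
begin

text \<open>Rank query model. The rank vector is a permutation sigma of {1..n}: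
  sigma j = rank(x_j). A query (j, m) asks how rank(x_j) compares to m.\<close>

datatype answer = Less | Equal | Greater

definition cmp_ans :: "nat \<Rightarrow> nat \<Rightarrow> answer" where
  "cmp_ans a m = (if a < m then Less else if a = m then Equal else Greater)"

type_synonym query = "nat \<times> nat"

type_synonym round_answers = "query \<Rightarrow> answer option"

definition answer_round :: "(nat \<Rightarrow> nat) \<Rightarrow> query set \<Rightarrow> round_answers" where
  "answer_round sigma S = (\<lambda>q. if q \<in> S then Some (cmp_ans (sigma (fst q)) (snd q)) else None)"

record algorithm =
  queries :: "round_answers list \<Rightarrow> query set"
  result  :: "round_answers list \<Rightarrow> nat"

fun history :: "algorithm \<Rightarrow> (nat \<Rightarrow> nat) \<Rightarrow> nat \<Rightarrow> round_answers list" where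
  "history A sigma 0 = []"
| "history A sigma (Suc r) =
     history A sigma r @ [answer_round sigma (queries A (history A sigma r))]"

definition num_queries :: "algorithm \<Rightarrow> (nat \<Rightarrow> nat) \<Rightarrow> nat \<Rightarrow> nat" where
  "num_queries A sigma k = (\<Sum>r<k. card (queries A (history A sigma r)))"

definition finite_queries :: "algorithm \<Rightarrow> (nat \<Rightarrow> nat) \<Rightarrow> nat \<Rightarrow> bool" where
  "finite_queries A sigma k = (\<forall>r<k. finite (queries A (history A sigma r)))"

definition run :: "algorithm \<Rightarrow> (nat \<Rightarrow> nat) \<Rightarrow> nat \<Rightarrow> nat" where
  "run A sigma k = result A (history A sigma k)"

definition success_prob :: "algorithm \<Rightarrow> nat \<Rightarrow> nat \<Rightarrow> nat \<Rightarrow> real" where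
  "success_prob A n i k =
     real (card {sigma. sigma permutes {1..n} \<and> run A sigma k = sigma i})
       / real (card {sigma. sigma permutes {1..n}})"

end

theory Submission imports Defs begin

lemma fib_card_eq:
  assumes "v \<in> S" "w \<in> S"
  shows "card {\<sigma>. \<sigma> permutes S \<and> \<sigma> i = v} = card {\<sigma>. \<sigma> permutes S \<and> \<sigma> i = w}"
proof -
  let ?f = "\<lambda>\<sigma>. transpose v w \<circ> \<sigma>"
  have inj: "inj_on ?f {\<sigma>. \<sigma> permutes S \<and> \<sigma> i = v}"
  proof (rule inj_onI)
    fix x y assume "?f x = ?f y"
    then have "?f (?f x) = ?f (?f y)" by simp
    then show "x = y" by (simp add: comp_assoc[symmetric])
  qed
  have "?f ` {\<sigma>. \<sigma> permutes S \<and> \<sigma> i = v} = {\<sigma>. \<sigma> permutes S \<and> \<sigma> i = w}"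
  proof (intro equalityI subsetI)
    fix x assume "x \<in> ?f ` {\<sigma>. \<sigma> permutes S \<and> \<sigma> i = v}"
    then show "x \<in> {\<sigma>. \<sigma> permutes S \<and> \<sigma> i = w}"
      using assms by (auto intro: permutes_compose permutes_swap_id)
  next
    fix x assume x: "x \<in> {\<sigma>. \<sigma> permutes S \<and> \<sigma> i = w}"
    have "x = ?f (?f x)" by (simp add: comp_assoc[symmetric])
    moreover have "?f x \<in> {\<sigma>. \<sigma> permutes S \<and> \<sigma> i = v}"
      using x assms by (auto intro: permutes_compose permutes_swap_id)
    ultimately show "x \<in> ?f ` {\<sigma>. \<sigma> permutes S \<and> \<sigma> i = v}" by blast
  qed
  moreover have "card (?f ` {\<sigma>. \<sigma> permutes S \<and> \<sigma> i = v}) = card {\<sigma>. \<sigma> permutes S \<and> \<sigma> i = v}"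
    by (rule card_image[OF inj])
  ultimately show ?thesis by simp
qed

lemma card_fib_union:
  assumes "finite S" "V \<subseteq> S" "w \<in> S"
  shows "card {\<sigma>. \<sigma> permutes S \<and> \<sigma> i \<in> V} = card V * card {\<sigma>. \<sigma> permutes S \<and> \<sigma> i = w}"
proof -
  have fV: "finite V" using assms finite_subset by blast
  have eq: "{\<sigma>. \<sigma> permutes S \<and> \<sigma> i \<in> V} = (\<Union>v\<in>V. {\<sigma>. \<sigma> permutes S \<and> \<sigma> i = v})" by auto
  have fin: "finite {\<sigma>. \<sigma> permutes S \<and> \<sigma> i = v}" for v
    using finite_permutations[OF assms(1)] by (rule finite_subset[rotated]) auto
  have "card {\<sigma>. \<sigma> permutes S \<and> \<sigma> i \<in> V} = (\<Sum>v\<in>V. card {\<sigma>. \<sigma> permutes S \<and> \<sigma> i = v})"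
    unfolding eq by (rule card_UN_disjoint) (auto simp: fV fin)
  also have "\<dots> = (\<Sum>v\<in>V. card {\<sigma>. \<sigma> permutes S \<and> \<sigma> i = w})"
    by (rule sum.cong[OF refl], rule fib_card_eq) (use assms in auto)
  finally show ?thesis by simp
qed

definition cnt :: "round_answers \<Rightarrow> nat" where
  "cnt h = card {q. h q = Some Equal \<or> h q = Some Greater}"

definition lo :: "nat \<Rightarrow> nat \<Rightarrow> round_answers list \<Rightarrow> nat" where
  "lo B k h = (\<Sum>r < length h. B^(k - 1 - r) * cnt (h!r))"

definition qs :: "nat \<Rightarrow> nat \<Rightarrow> nat \<Rightarrow> round_answers list \<Rightarrow> query set" where
  "qs B k i h = (if length h < k then (\<lambda>j. (i, lo B k h + j * B^(k - 1 - length h) + 1)) ` {1..B-1} else {})"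

definition alg :: "nat \<Rightarrow> nat \<Rightarrow> nat \<Rightarrow> algorithm" where
  "alg B k i = \<lparr>queries = qs B k i, result = (\<lambda>h. lo B k h + 1)\<rparr>"

lemma length_history[simp]: "length (history A sigma r) = r"
  by (induction r) auto

lemma lo_snoc: "lo B k (h @ [a]) = lo B k h + B^(k - 1 - length h) * cnt a"
  unfolding lo_def by (simp add: nth_append)

lemma card_qs: "B \<ge> 1 \<Longrightarrow> length h < k \<Longrightarrow> card (qs B k i h) = B - 1"
  unfolding qs_def
  by (simp add: card_image inj_on_def)

lemma cnt_round:
  assumes "B \<ge> 1" "length h < k"
  shows "cnt (answer_round sigma (qs B k i h)) =
         card {j \<in> {1..B-1}. lo B k h + j * B^(k - 1 - length h) < sigma i}"
proof -
  let ?s = "B^(k - 1 - length h)"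
  let ?g = "\<lambda>j. (i, lo B k h + j * ?s + 1)"
  have s: "?s \<ge> 1" using assms by simp
  have inj: "inj_on ?g X" for X using s assms(1) by (intro inj_onI) auto
  have "{q. answer_round sigma (qs B k i h) q = Some Equal \<or> answer_round sigma (qs B k i h) q = Some Greater}
      = ?g ` {j \<in> {1..B-1}. lo B k h + j * ?s < sigma i}"
    using assms by (auto simp: answer_round_def qs_def cmp_ans_def split: if_splits)
  moreover have "card (?g ` {j \<in> {1..B-1}. lo B k h + j * ?s < sigma i}) = card {j \<in> {1..B-1}. lo B k h + j * ?s < sigma i}"
    by (rule card_image[OF inj])
  ultimately show ?thesis unfolding cnt_def by simp
qed

lemma card_le_set: "(s::nat) \<ge> 1 \<Longrightarrow> card {j \<in> {1..t}. j * s \<le> d} = min t (d div s)"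
proof -
  assume s: "s \<ge> 1"
  have "{j \<in> {1..t}. j * s \<le> d} = {1..min t (d div s)}"
    using s by (auto simp: less_eq_div_iff_mult_less_eq)
  then show ?thesis by simp
qed

lemma aux_nat: "(s::nat) * q + r = x - l \<Longrightarrow> r < s \<Longrightarrow> l \<le> x \<Longrightarrow> l + s * q \<le> x \<and> x < l + s * q + s"
  by linarith

lemma invariant:
  assumes B: "B \<ge> 1" and si: "sigma i \<ge> 1" and xb: "sigma i - 1 < B^k"
  shows "r \<le> k \<Longrightarrow> lo B k (history (alg B k i) sigma r) \<le> sigma i - 1 \<and>
           sigma i - 1 < lo B k (history (alg B k i) sigma r) + B^(k - r)"
proof (induction r)
  case 0
  then show ?case using xb by (simp add: lo_def)
next
  case (Suc r)
  define h where "h = history (alg B k i) sigma r"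
  define x where "x = sigma i - 1"
  define s where "s = B^(k - 1 - r)"
  define l where "l = lo B k h"
  have r: "r < k" using Suc by simp
  have IH: "l \<le> x" "x < l + B^(k - r)" using Suc r unfolding l_def h_def x_def by auto
  have lh: "length h = r" unfolding h_def by simp
  have s1: "s \<ge> 1" unfolding s_def using B by simp
  have Bs: "B^(k - r) = B * s" unfolding s_def using r
    by (metis Suc_diff_Suc diff_Suc_eq_diff_pred power_Suc)
  have hs: "history (alg B k i) sigma (Suc r) = h @ [answer_round sigma (qs B k i h)]"
    unfolding h_def by (simp add: alg_def)
  have c: "cnt (answer_round sigma (qs B k i h)) = card {j \<in> {1..B-1}. j * s \<le> x - l}"
    unfolding cnt_round[OF B, of h k sigma i, unfolded lh, OF r]
    using IH si unfolding s_def l_def x_def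
    by (intro arg_cong[where f=card]) auto
  also have "\<dots> = min (B - 1) ((x - l) div s)" using card_le_set[OF s1] .
  also have "\<dots> = (x - l) div s"
  proof -
    have "x - l < B * s" using IH Bs by linarith
    then have "(x - l) div s < B" using s1
      by (simp add: div_less_iff_less_mult mult.commute)
    then show ?thesis by simp
  qed
  finally have c: "cnt (answer_round sigma (qs B k i h)) = (x - l) div s" .
  have new: "lo B k (history (alg B k i) sigma (Suc r)) = l + s * ((x - l) div s)"
    unfolding hs lo_snoc c lh l_def s_def by simp
  have d: "s * ((x - l) div s) + (x - l) mod s = x - l" by simp
  have m: "(x - l) mod s < s" using s1 by simp
  have ks: "B^(k - Suc r) = s" unfolding s_def by simp
  have fin: "l + s * ((x - l) div s) \<le> x \<and> x < l + s * ((x - l) div s) + s"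
    using aux_nat[OF d m IH(1)] .
  show ?case unfolding new ks using fin unfolding x_def .
qed

theorem proposition5:
  fixes p :: real and k n i :: nat
  assumes "0 \<le> p" "p \<le> 1" "k \<ge> 1" "n \<ge> 1" "i \<in> {1..n}"
  shows "\<exists>A :: algorithm.
           (\<forall>sigma. sigma permutes {1..n} \<longrightarrow>
              finite_queries A sigma k \<and>
              real (num_queries A sigma k)
                \<le> real k * (real_of_int \<lceil>p * real n\<rceil>) powr (1 / real k))
         \<and> success_prob A n i k \<ge> p"
proof -
  define m where "m = nat \<lceil>p * real n\<rceil>"
  define t where "t = nat \<lfloor>real m powr (1 / real k)\<rfloor>"
  define B where "B = Suc t"
  define A where "A = alg B k i"
  have B1: "B \<ge> 1" unfolding B_def by simp
  have mreal: "real_of_int \<lceil>p * real n\<rceil> = real m"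
    unfolding m_def using assms by simp
  have pm: "p * real n \<le> real m" unfolding m_def by linarith
  have mn: "m \<le> n"
  proof -
    have pn: "p * real n \<le> 1 * real n" using assms by (intro mult_right_mono) auto
    then have "\<lceil>p * real n\<rceil> \<le> \<lceil>real n\<rceil>" by (intro ceiling_mono) simp
    then have "\<lceil>p * real n\<rceil> \<le> int n" by simp
    then show ?thesis unfolding m_def using pn by simp
  qed
  have tle: "real t \<le> real m powr (1 / real k)"
    unfolding t_def by simp
  have mB: "m < B^k"
  proof (cases "m = 0")
    case True then show ?thesis by (simp add: B_def)
  next
    case False
    have lt: "real m powr (1 / real k) < real B"
      unfolding B_def t_def by linarith
    have "real m = (real m powr (1 / real k)) powr real k"
      using False assms(3) by (simp add: powr_powr)
    also have "\<dots> = (real m powr (1 / real k)) ^ k"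
      using False by (simp add: powr_realpow)
    also have "\<dots> < real B ^ k"
      using lt assms(3) by (intro power_strict_mono) auto
    finally show ?thesis by (metis of_nat_less_iff of_nat_power)
  qed
  have hq: "queries A h = qs B k i h" for h unfolding A_def alg_def by simp
  have Q: "finite_queries A sigma k \<and>
              real (num_queries A sigma k) \<le> real k * (real_of_int \<lceil>p * real n\<rceil>) powr (1 / real k)"
    for sigma
  proof
    show "finite_queries A sigma k" unfolding finite_queries_def hq qs_def by simp
    have "num_queries A sigma k = k * t"
      unfolding num_queries_def hq using card_qs[OF B1] by (simp add: B_def)
    then show "real (num_queries A sigma k) \<le> real k * (real_of_int \<lceil>p * real n\<rceil>) powr (1 / real k)"
      unfolding mreal using tle by (simp add: mult_left_mono)
  qed
  define N where "N = min n (B^k)"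
  define c where "c = card {\<sigma>. \<sigma> permutes {1..n} \<and> \<sigma> i = 1}"
  have one: "1 \<in> {1..n::nat}" using assms by simp
  have all: "card {\<sigma>. \<sigma> permutes {1..n}} = n * c"
  proof -
    have "{\<sigma>. \<sigma> permutes {1..n}} = {\<sigma>. \<sigma> permutes {1..n} \<and> \<sigma> i \<in> {1..n}}"
    proof -
      have "sigma i \<in> {1..n}" if "sigma permutes {1..n}" for sigma
        using permutes_in_image[OF that] assms(5) by blast
      then show ?thesis by blast
    qed
    then show ?thesis unfolding c_def using card_fib_union[OF _ order_refl one, of i] by simp
  qed
  have sub: "{\<sigma>. \<sigma> permutes {1..n} \<and> \<sigma> i \<in> {1..N}}
      \<subseteq> {sigma. sigma permutes {1..n} \<and> run A sigma k = sigma i}"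
  proof safe
    fix sigma assume sp: "sigma permutes {1..n}" and si: "sigma i \<in> {1..N}"
    have si1: "1 \<le> sigma i" using si by simp
    have "sigma i \<le> B^k" using si unfolding N_def by simp
    then have "sigma i - 1 < B^k" using si1 by linarith
    from invariant[of B sigma i k k, OF B1 si1 this order_refl]
    have "lo B k (history (alg B k i) sigma k) \<le> sigma i - 1 \<and>
           sigma i - 1 < lo B k (history (alg B k i) sigma k) + 1" by simp
    then have "lo B k (history (alg B k i) sigma k) + 1 = sigma i" using si1 by linarith
    moreover have "result A h = lo B k h + 1" for h unfolding A_def alg_def by simp
    ultimately show "run A sigma k = sigma i"
      unfolding run_def A_def by simp
  qed
  have fin: "finite {sigma. sigma permutes {1..n} \<and> run A sigma k = sigma i}"
    using finite_permutations[of "{1..n::nat}"] by (rule finite_subset[rotated]) auto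
  have cN: "card {\<sigma>. \<sigma> permutes {1..n} \<and> \<sigma> i \<in> {1..N}} = N * c"
    unfolding c_def using card_fib_union[of "{1..n}" "{1..N}" 1 i] one by (simp add: N_def)
  have ge: "N * c \<le> card {sigma. sigma permutes {1..n} \<and> run A sigma k = sigma i}"
    using card_mono[OF fin sub] cN by simp
  have fpos: "card {\<sigma>. \<sigma> permutes {1..n::nat}} > 0"
    using card_permutations[of "{1..n::nat}" n] by simp
  then have cpos: "c > 0" using all by simp
  have mN: "m \<le> N" unfolding N_def using mn mB by simp
  have "real m \<le> real N" using mN by simp
  then have "p * real n \<le> real N" using pm by linarith
  then have "p \<le> real N / real n"
    using assms(4) by (simp add: pos_le_divide_eq)
  also have "\<dots> = real (N * c) / real (n * c)" using cpos by simp
  also have "\<dots> \<le> success_prob A n i k"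
    unfolding success_prob_def all[symmetric]
  proof (rule divide_right_mono)
    show "real (N * c) \<le> real (card {sigma. sigma permutes {1..n} \<and> run A sigma k = sigma i})"
      using ge by (simp only: of_nat_le_iff)
  qed simp
  finally show ?thesis using Q by blast
qed

end
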